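(* Let $N\ge 2$ be an integer and consider the one-mode projection graph $G_N$ on the primes $\le N$ defined below. For every prime $p\le N$, the degree of $p$ in $G_N$ equals $\pi\left(\frac{N}{p}\right)$, where $\pi(x)$ is the number of primes $\le x$.
   Context: The graph $G_N$ has vertex set the primes $p\le N$. Two distinct primes $p,p'\le N$ are adjacent iff some composite integer $c\le N$ is divisible by both $p$ and $p'$ (equivalently the number of such composites, which is the weight of the edge, is positive). A prime $p$ carries a self-loop iff $p^2\le N$. The degree of $p$ is the number of distinct primes $p'\ne p$ adjacent to $p$, plus $1$ if $p$ carries a self-loop. *)

theory Defs
  imports "HOL-Computational_Algebra.Primes" Complex_Main
begin

definition prime_pi :: "real \<Rightarrow> nat" where
  "prime_pi x = card {p :: nat. prime p \<and> real p \<le> x}"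

definition adjacent :: "nat \<Rightarrow> nat \<Rightarrow> nat \<Rightarrow> bool" where
  "adjacent N p q \<longleftrightarrow> prime p \<and> prime q \<and> p \<le> N \<and> q \<le> N \<and> p \<noteq> q \<and>
     (\<exists>c :: nat. 1 < c \<and> \<not> prime c \<and> c \<le> N \<and> p dvd c \<and> q dvd c)"

definition has_loop :: "nat \<Rightarrow> nat \<Rightarrow> bool" where
  "has_loop N p \<longleftrightarrow> p ^ 2 \<le> N"

definition degree :: "nat \<Rightarrow> nat \<Rightarrow> nat" where
  "degree N p = card {q :: nat. adjacent N p q} + (if has_loop N p then 1 else 0)"

end

theory Submission
  imports Defs
begin

lemma adj_iff:
  assumes "prime p" "p \<le> N"
  shows "adjacent N p q \<longleftrightarrow> prime q \<and> q \<noteq> p \<and> p * q \<le> N"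
proof
  assume a: "adjacent N p q"
  then obtain c where c: "1 < c" "c \<le> N" "p dvd c" "q dvd c" and q: "prime q" "q \<noteq> p"
    unfolding adjacent_def by blast
  have "coprime p q" using assms(1) q primes_coprime by metis
  hence "p * q dvd c" using c divides_mult by blast
  hence "p * q \<le> c" using c(1) by (intro dvd_imp_le) auto
  thus "prime q \<and> q \<noteq> p \<and> p * q \<le> N" using q c by simp
next
  assume h: "prime q \<and> q \<noteq> p \<and> p * q \<le> N"
  have p1: "p > 1" "q > 1" using assms h prime_gt_1_nat by auto
  have "q \<le> p * q" using p1 by simp
  moreover have "\<not> prime (p * q)" using p1 prime_product[of p q] by auto
  moreover have "1 < p * q" using p1 by (metis less_1_mult)
  moreover have "q \<le> N" using h \<open>q \<le> p * q\<close> by linarith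
  ultimately show "adjacent N p q" unfolding adjacent_def using h assms
    by (intro conjI exI[of _ "p*q"]) simp_all
qed

theorem mainTheorem8:
  fixes N p :: nat
  assumes "N \<ge> 2" and "prime p" and "p \<le> N"
  shows "degree N p = prime_pi (real N / real p)"
proof -
  have p0: "p > 0" using assms prime_gt_0_nat by auto
  have A: "{q. adjacent N p q} = {q. prime q \<and> q \<noteq> p \<and> p * q \<le> N}"
    using adj_iff[OF assms(2,3)] by blast
  have B: "{q :: nat. prime q \<and> real q \<le> real N / real p} = {q. prime q \<and> p * q \<le> N}"
  proof -
    have "real q \<le> real N / real p \<longleftrightarrow> p * q \<le> N" for q
    proof -
      have "real q \<le> real N / real p \<longleftrightarrow> real p * real q \<le> real N"
        using p0 by (simp add: field_simps)
      also have "\<dots> \<longleftrightarrow> p * q \<le> N" by (metis of_nat_le_iff of_nat_mult)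
      finally show ?thesis .
    qed
    thus ?thesis by auto
  qed
  have fin: "finite {q. prime q \<and> p * q \<le> N}"
  proof (rule finite_subset[of _ "{..N}"])
    show "{q. prime q \<and> p * q \<le> N} \<subseteq> {..N}"
    proof
      fix q assume "q \<in> {q. prime q \<and> p * q \<le> N}"
      hence "p * q \<le> N" by simp
      moreover have "q \<le> p * q" using p0 by simp
      ultimately have "q \<le> N" by linarith
      thus "q \<in> {..N}" by simp
    qed
  qed simp
  show ?thesis
  proof (cases "p^2 \<le> N")
    case True
    have "{q. prime q \<and> p * q \<le> N} = insert p {q. prime q \<and> q \<noteq> p \<and> p * q \<le> N}"
      using True assms by (auto simp: power2_eq_square)
    hence "card {q. prime q \<and> p * q \<le> N} = card {q. prime q \<and> q \<noteq> p \<and> p * q \<le> N} + 1"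
      using fin by (simp add: card_insert_if)
    thus ?thesis using True unfolding degree_def prime_pi_def has_loop_def A B by simp
  next
    case False
    have "{q. prime q \<and> p * q \<le> N} = {q. prime q \<and> q \<noteq> p \<and> p * q \<le> N}"
      using False by (auto simp: power2_eq_square)
    thus ?thesis using False unfolding degree_def prime_pi_def has_loop_def A B by simp
  qed
qed

end
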